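(* Let $\mathcal V,\mathcal W$ be operator spaces, let $\mathcal D\subseteq\mathcal V_{\rm nc}$ be a finitely open noncommutative set and $\mathcal E\subseteq\mathcal W_{\rm nc}$ a noncommutative set, and let $f\colon\mathcal D\to\mathcal E$ be a locally bounded noncommutative function. Then $\delta_{\mathcal E}(f(a),f(c))(\Delta f(a,c)(b))\le\delta_{\mathcal D}(a,c)(b)$ for all $m,n\in\mathbb N$, $a\in\mathcal D_n$, $c\in\mathcal D_m$, $b\in\mathcal V^{n\times m}$.
   Context: A noncommutative set is a family $\mathcal D=(\mathcal D_n)$, $\mathcal D_n\subseteq\mathcal V^{n\times n}$, closed under direct sums $a\oplus c=\begin{bmatrix}a&0\\0&c\end{bmatrix}$. It is finitely open if for each $n$ the intersection of $\mathcal D_n$ with any finite-dimensional subspace of $\mathcal V^{n\times n}$ is open in that subspace. A noncommutative function $f\colon\mathcal D\to\mathcal E$ maps $\mathcal D_n$ into $\mathcal E_n$ and respects intertwinings by scalar matrices: $aS=Sb\Rightarrow f(a)S=Sf(b)$ for $a\in\mathcal D_m,b\in\mathcal D_n,S\in\mathbb C^{m\times n}$. $\Delta f(a,c)\colon\mathcal V^{n\times m}\to\mathcal W^{n\times m}$ denotes the (linear) difference-differential of $f$, determined by $f\Big(\begin{bmatrix}a&b\\0&c\end{bmatrix}\Big)=\begin{bmatrix}f(a)&\Delta f(a,c)(b)\\0&f(c)\end{bmatrix}$ whenever the block matrix lies in $\mathcal D_{n+m}$. For $a\in\mathcal D_n,c\in\mathcal D_m,b\in\mathcal V^{n\times m}$,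 $\delta_{\mathcal D}(a,c)(b)=\big[\sup\{t\in[0,+\infty]\colon\begin{bmatrix}a&sb\\0&c\end{bmatrix}\in\mathcal D_{n+m}\ \forall s\in[0,t]\}\big]^{-1}\in[0,+\infty]$ ($1/0=+\infty$, $1/\infty=0$); similarly for $\mathcal E$. *)

theory Defs
  imports "HOL-Analysis.Analysis" "HOL-Library.Extended_Nonnegative_Real"
begin

class complex_normed_space = real_normed_vector +
  fixes scaleC :: "complex \<Rightarrow> 'a \<Rightarrow> 'a"
  assumes scaleC_add_right: "scaleC c (x + y) = scaleC c x + scaleC c y"
    and scaleC_add_left: "scaleC (c + d) x = scaleC c x + scaleC d x"
    and scaleC_mult: "scaleC (c * d) x = scaleC c (scaleC d x)"
    and scaleC_one: "scaleC 1 x = x"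
    and scaleC_of_real: "scaleC (of_real r) x = scaleR r x"
    and norm_scaleC: "norm (scaleC c x) = cmod c * norm x"

section \<open>Matrices over a space, represented as zero-padded functions\<close>

type_synonym 'v mtx = "nat \<Rightarrow> nat \<Rightarrow> 'v"

definition mats :: "nat \<Rightarrow> nat \<Rightarrow> ('v::zero) mtx set" where
  "mats n m = {a. \<forall>i j. (n \<le> i \<or> m \<le> j) \<longrightarrow> a i j = 0}"

definition mzero :: "('v::zero) mtx" where
  "mzero = (\<lambda>i j. 0)"

definition madd :: "('v::plus) mtx \<Rightarrow> 'v mtx \<Rightarrow> 'v mtx" where
  "madd x y = (\<lambda>i j. x i j + y i j)"

definition mdiff :: "('v::minus) mtx \<Rightarrow> 'v mtx \<Rightarrow> 'v mtx" where
  "mdiff x y = (\<lambda>i j. x i j - y i j)"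

definition mscale :: "complex \<Rightarrow> ('v::complex_normed_space) mtx \<Rightarrow> 'v mtx" where
  "mscale z x = (\<lambda>i j. scaleC z (x i j))"

text \<open>Block upper triangular matrix [a b; 0 c] with a of size n x n.\<close>
definition blk :: "nat \<Rightarrow> ('v::zero) mtx \<Rightarrow> 'v mtx \<Rightarrow> 'v mtx \<Rightarrow> 'v mtx" where
  "blk n a b c = (\<lambda>i j. if i < n then (if j < n then a i j else b i (j - n))
                        else (if j < n then 0 else c (i - n) (j - n)))"

definition dsum :: "nat \<Rightarrow> ('v::zero) mtx \<Rightarrow> 'v mtx \<Rightarrow> 'v mtx" where
  "dsum n a c = blk n a mzero c"

definition lmul :: "nat \<Rightarrow> complex mtx \<Rightarrow> ('v::complex_normed_space) mtx \<Rightarrow> 'v mtx" where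
  "lmul k S x = (\<lambda>i j. \<Sum>l<k. scaleC (S i l) (x l j))"

definition rmul :: "nat \<Rightarrow> ('v::complex_normed_space) mtx \<Rightarrow> complex mtx \<Rightarrow> 'v mtx" where
  "rmul k x S = (\<lambda>i j. \<Sum>l<k. scaleC (S l j) (x i l))"

text \<open>Operator norm of a scalar n x m matrix acting from l2^m to l2^n.\<close>
definition cmatnorm :: "nat \<Rightarrow> nat \<Rightarrow> complex mtx \<Rightarrow> real" where
  "cmatnorm n m \<alpha> = Sup {sqrt (\<Sum>i<n. (cmod (\<Sum>j<m. \<alpha> i j * x j))\<^sup>2) | x.
                          (\<Sum>j<m. (cmod (x j))\<^sup>2) \<le> 1}"

section \<open>Operator spaces (abstract, Ruan's axioms)\<close>

text \<open>N n is the norm on M_n(V) (n \<ge> 1).\<close>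
definition opspace :: "(nat \<Rightarrow> ('v::complex_normed_space) mtx \<Rightarrow> real) \<Rightarrow> bool" where
  "opspace N \<longleftrightarrow>
     (\<forall>x::'v. N 1 (\<lambda>i j. if i = 0 \<and> j = 0 then x else 0) = norm x) \<and>
     (\<forall>n>0. \<forall>x\<in>mats n n. 0 \<le> N n x \<and> (N n x = 0 \<longleftrightarrow> x = mzero)) \<and>
     (\<forall>n>0. \<forall>x\<in>mats n n. \<forall>y\<in>mats n n. N n (madd x y) \<le> N n x + N n y) \<and>
     (\<forall>n>0. \<forall>z. \<forall>x\<in>mats n n. N n (mscale z x) = cmod z * N n x) \<and>
     (\<forall>n m. 0 < n \<longrightarrow> 0 < m \<longrightarrow> (\<forall>x\<in>mats n n. \<forall>y\<in>mats m m.
         N (n + m) (dsum n x y) = max (N n x) (N m y))) \<and>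
     (\<forall>n m. 0 < n \<longrightarrow> 0 < m \<longrightarrow> (\<forall>\<alpha>\<in>mats n m. \<forall>\<beta>\<in>mats m n. \<forall>x\<in>mats m m.
         N n (lmul m \<alpha> (rmul m x \<beta>)) \<le> cmatnorm n m \<alpha> * N m x * cmatnorm m n \<beta>))"

definition nc_set :: "(nat \<Rightarrow> ('v::zero) mtx set) \<Rightarrow> bool" where
  "nc_set D \<longleftrightarrow> (\<forall>n>0. D n \<subseteq> mats n n) \<and>
     (\<forall>n m a c. 0 < n \<longrightarrow> 0 < m \<longrightarrow> a \<in> D n \<longrightarrow> c \<in> D m \<longrightarrow> dsum n a c \<in> D (n + m))"

definition fspan :: "nat \<Rightarrow> (nat \<Rightarrow> ('v::complex_normed_space) mtx) \<Rightarrow> 'v mtx set" where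
  "fspan k v = {x. \<exists>z::nat \<Rightarrow> complex. x = (\<lambda>i j. \<Sum>l<k. scaleC (z l) (v l i j))}"

definition finitely_open ::
  "(nat \<Rightarrow> ('v::complex_normed_space) mtx \<Rightarrow> real) \<Rightarrow> (nat \<Rightarrow> 'v mtx set) \<Rightarrow> bool" where
  "finitely_open N D \<longleftrightarrow>
     (\<forall>n>0. \<forall>k v. (\<forall>l<k. v l \<in> mats n n) \<longrightarrow>
        (\<forall>p \<in> D n \<inter> fspan k v. \<exists>\<epsilon>>0. \<forall>x \<in> fspan k v. N n (mdiff x p) < \<epsilon> \<longrightarrow> x \<in> D n))"

definition nc_function ::
  "(nat \<Rightarrow> ('v::complex_normed_space) mtx set) \<Rightarrow> (nat \<Rightarrow> ('w::complex_normed_space) mtx set)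
   \<Rightarrow> (nat \<Rightarrow> 'v mtx \<Rightarrow> 'w mtx) \<Rightarrow> bool" where
  "nc_function D E f \<longleftrightarrow>
     (\<forall>n>0. \<forall>a\<in>D n. f n a \<in> E n) \<and>
     (\<forall>m n a b S. 0 < m \<longrightarrow> 0 < n \<longrightarrow> a \<in> D m \<longrightarrow> b \<in> D n \<longrightarrow> S \<in> mats m n \<longrightarrow>
        rmul m a S = lmul n S b \<longrightarrow> rmul m (f m a) S = lmul n S (f n b))"

definition locally_bounded ::
  "(nat \<Rightarrow> ('v::complex_normed_space) mtx \<Rightarrow> real) \<Rightarrow> (nat \<Rightarrow> ('w::complex_normed_space) mtx \<Rightarrow> real)
   \<Rightarrow> (nat \<Rightarrow> 'v mtx set) \<Rightarrow> (nat \<Rightarrow> 'v mtx \<Rightarrow> 'w mtx) \<Rightarrow> bool" where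
  "locally_bounded NV NW D f \<longleftrightarrow>
     (\<forall>n>0. \<forall>a\<in>D n. \<exists>r>0. \<exists>M. \<forall>x\<in>D n. NV n (mdiff x a) < r \<longrightarrow> NW n (f n x) \<le> M)"

definition Delta ::
  "(nat \<Rightarrow> ('v::complex_normed_space) mtx set) \<Rightarrow> (nat \<Rightarrow> 'v mtx \<Rightarrow> ('w::complex_normed_space) mtx)
   \<Rightarrow> nat \<Rightarrow> nat \<Rightarrow> 'v mtx \<Rightarrow> 'v mtx \<Rightarrow> 'v mtx \<Rightarrow> 'w mtx" where
  "Delta D f n m a c = (THE L.
      (\<forall>b. b \<notin> mats n m \<longrightarrow> L b = mzero) \<and>
      (\<forall>b\<in>mats n m. L b \<in> mats n m) \<and>
      (\<forall>b1\<in>mats n m. \<forall>b2\<in>mats n m. L (madd b1 b2) = madd (L b1) (L b2)) \<and>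
      (\<forall>z. \<forall>b\<in>mats n m. L (mscale z b) = mscale z (L b)) \<and>
      (\<forall>b\<in>mats n m. blk n a b c \<in> D (n + m) \<longrightarrow>
          f (n + m) (blk n a b c) = blk n (f n a) (L b) (f m c)))"

text \<open>delta_D(a,c)(b) = [sup{t \<in> [0,\<infinity>]. [a, sb; 0, c] \<in> D_{n+m} for all s \<in> [0,t]}]^{-1},
  with 1/0 = \<infinity>, 1/\<infinity> = 0 (as for inverse on ennreal).\<close>
definition delta :: "(nat \<Rightarrow> ('v::complex_normed_space) mtx set) \<Rightarrow> nat \<Rightarrow> nat
   \<Rightarrow> 'v mtx \<Rightarrow> 'v mtx \<Rightarrow> 'v mtx \<Rightarrow> ennreal" where
  "delta D n m a c b = inverse (Sup {t::ennreal. \<forall>s::real. 0 \<le> s \<and> ennreal s \<le> t \<longrightarrow>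
        blk n a (mscale (complex_of_real s) b) c \<in> D (n + m)})"

end

theory Submission
  imports Defs
begin


lemma ennreal_inv_antimono: "(x::ennreal) \<le> y \<Longrightarrow> inverse y \<le> inverse x"
  including ennreal.lifting
  apply transfer
  apply (rule ereal_inverse_antimono) apply auto
  done

lemma scaleC_zero_right[simp]: "scaleC c (0::'a::complex_normed_space) = 0"
proof -
  have "scaleC c (0::'a) = scaleC c 0 + scaleC c 0" by (metis add_0 scaleC_add_right)
  thus ?thesis by simp
qed

lemma scaleC_zero_left[simp]: "scaleC 0 (x::'a::complex_normed_space) = 0"
  using scaleC_of_real[of 0 x] by simp

declare scaleC_one[simp]

lemma rmul_col:
  assumes "\<And>l j. S l j = (if l = \<sigma> j then w j else 0)"
  shows "rmul k x S = (\<lambda>i j. if \<sigma> j < k then scaleC (w j) (x i (\<sigma> j)) else 0)"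
proof (rule ext, rule ext)
  fix i j
  have "rmul k x S i j = (\<Sum>l<k. if l = \<sigma> j then scaleC (w j) (x i l) else 0)"
    unfolding rmul_def by (rule sum.cong) (auto simp: assms)
  also have "\<dots> = (if \<sigma> j < k then scaleC (w j) (x i (\<sigma> j)) else 0)"
    by (simp add: sum.delta)
  finally show "rmul k x S i j = (if \<sigma> j < k then scaleC (w j) (x i (\<sigma> j)) else 0)" .
qed

lemma lmul_row:
  assumes "\<And>i l. S i l = (if l = \<rho> i then u i else 0)"
  shows "lmul k S y = (\<lambda>i j. if \<rho> i < k then scaleC (u i) (y (\<rho> i) j) else 0)"
proof (rule ext, rule ext)
  fix i j
  have "lmul k S y i j = (\<Sum>l<k. if l = \<rho> i then scaleC (u i) (y l j) else 0)"
    unfolding lmul_def by (rule sum.cong) (auto simp: assms)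
  also have "\<dots> = (if \<rho> i < k then scaleC (u i) (y (\<rho> i) j) else 0)"
    by (simp add: sum.delta)
  finally show "lmul k S y i j = (if \<rho> i < k then scaleC (u i) (y (\<rho> i) j) else 0)" .
qed

lemma rmul_add:
  "rmul k x (\<lambda>l j. S l j + S' l j) = (\<lambda>i j. rmul k x S i j + rmul k x S' i j)"
  unfolding rmul_def by (simp add: scaleC_add_left sum.distrib)

lemma matsD: "x \<in> mats n m \<Longrightarrow> n \<le> i \<or> m \<le> j \<Longrightarrow> x i j = 0"
  unfolding mats_def by auto

lemma matsD1: "x \<in> mats n m \<Longrightarrow> n \<le> i \<Longrightarrow> x i j = 0"
  unfolding mats_def by auto
lemma matsD2: "x \<in> mats n m \<Longrightarrow> m \<le> j \<Longrightarrow> x i j = 0"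
  unfolding mats_def by auto

definition ub :: "nat \<Rightarrow> nat \<Rightarrow> ('w::zero) mtx \<Rightarrow> 'w mtx" where
  "ub n m F = (\<lambda>i j. if i < n \<and> j < m then F i (j + n) else 0)"

lemma ub_mats: "ub n m F \<in> mats n m"
  unfolding ub_def mats_def by auto

lemma ub_blk: "B \<in> mats n m \<Longrightarrow> ub n m (blk n A B C) = B"
  unfolding ub_def blk_def by (auto intro!: ext simp: matsD1 matsD2)

definition rowm :: "nat \<Rightarrow> ('u::zero) mtx \<Rightarrow> 'u mtx \<Rightarrow> 'u mtx" where
  "rowm m x1 x2 = (\<lambda>i j. if j < m then x1 i j else x2 i (j - m))"

context
  fixes D :: "nat \<Rightarrow> ('v::complex_normed_space) mtx set"
    and E :: "nat \<Rightarrow> ('w::complex_normed_space) mtx set"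
    and f :: "nat \<Rightarrow> 'v mtx \<Rightarrow> 'w mtx"
  assumes ncD: "nc_set D" and ncE: "nc_set E" and ncf: "nc_function D E f"
begin

lemma D_mats: "0 < k \<Longrightarrow> x \<in> D k \<Longrightarrow> x \<in> mats k k"
  using ncD unfolding nc_set_def by auto

lemma fE: "0 < k \<Longrightarrow> x \<in> D k \<Longrightarrow> f k x \<in> E k"
  using ncf unfolding nc_function_def by auto

lemma f_mats: "0 < k \<Longrightarrow> x \<in> D k \<Longrightarrow> f k x \<in> mats k k"
  using ncE fE unfolding nc_set_def by blast

lemma icw: "0 < p \<Longrightarrow> 0 < q \<Longrightarrow> A \<in> D p \<Longrightarrow> B \<in> D q \<Longrightarrow> S \<in> mats p q \<Longrightarrow>
   rmul p A S = lmul q S B \<Longrightarrow> rmul p (f p A) S = lmul q S (f q B)"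
  using ncf unfolding nc_function_def by blast

lemma struct:
  assumes n: "0 < n" and m: "0 < m" and a: "a \<in> D n" and c: "c \<in> D m"
    and x: "x \<in> mats n m" and X: "blk n a x c \<in> D (n + m)"
  shows "f (n + m) (blk n a x c) = blk n (f n a) (ub n m (f (n + m) (blk n a x c))) (f m c)"
proof -
  define F where "F = f (n + m) (blk n a x c)"
  have am: "a \<in> mats n n" using D_mats n a by blast
  have cm: "c \<in> mats m m" using D_mats m c by blast
  have fam: "f n a \<in> mats n n" using f_mats n a by blast
  have fcm: "f m c \<in> mats m m" using f_mats m c by blast
  have Fm: "F \<in> mats (n+m) (n+m)" unfolding F_def using f_mats X n by simp
  define S1 :: "complex mtx" where "S1 = (\<lambda>l j. if l = j then (if j < n then 1 else 0) else 0)"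
  have S1c: "\<And>l j. S1 l j = (if l = j then (if j < n then 1 else 0) else 0)" by (simp add: S1_def)
  have S1r: "\<And>i l. S1 i l = (if l = i then (if i < n then 1 else 0) else 0)" by (auto simp add: S1_def)
  have S1m: "S1 \<in> mats (n+m) n" unfolding mats_def S1_def by auto
  have e1: "rmul (n+m) (blk n a x c) S1 = lmul n S1 a"
    unfolding rmul_col[OF S1c] lmul_row[OF S1r]
    by (auto intro!: ext simp: blk_def matsD1[OF am] matsD2[OF am])
  have r1: "rmul (n+m) F S1 = lmul n S1 (f n a)"
    unfolding F_def using icw[OF _ n X a S1m e1] n by simp
  define S2 :: "complex mtx" where "S2 = (\<lambda>l j. if l = j - n then (if n \<le> j \<and> j < n + m then 1 else 0) else 0)"
  have S2c: "\<And>l j. S2 l j = (if l = j - n then (if n \<le> j \<and> j < n + m then 1 else 0) else 0)" by (simp add: S2_def)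
  have S2r: "\<And>i l. S2 i l = (if l = i + n then (if i < m then 1 else 0) else 0)" by (auto simp add: S2_def)
  have S2m: "S2 \<in> mats m (n+m)" unfolding mats_def S2_def by auto
  have e2: "rmul m c S2 = lmul (n+m) S2 (blk n a x c)"
    unfolding rmul_col[OF S2c] lmul_row[OF S2r]
    by (auto intro!: ext simp: blk_def matsD1[OF cm] matsD2[OF cm])
  have r2: "rmul m (f m c) S2 = lmul (n+m) S2 F"
    unfolding F_def using icw[OF m _ c X S2m e2] n by simp
  show ?thesis unfolding F_def[symmetric]
  proof (rule ext, rule ext)
    fix i j
    have A: "\<And>i j. rmul (n+m) F S1 i j = lmul n S1 (f n a) i j" using r1 by simp
    have B: "\<And>i j. rmul m (f m c) S2 i j = lmul (n+m) S2 F i j" using r2 by simp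
    show "F i j = blk n (f n a) (ub n m F) (f m c) i j"
    proof (cases "i < n")
      case True
      then show ?thesis
      proof (cases "j < n")
        case True
        with \<open>i < n\<close> A[of i j] show ?thesis
          unfolding rmul_col[OF S1c] lmul_row[OF S1r] blk_def by simp
      next
        case False
        with \<open>i < n\<close> show ?thesis
          by (auto simp: blk_def ub_def matsD2[OF Fm])
      qed
    next
      case False
      then obtain i' where i': "i = i' + n" by (metis add.commute le_add_diff_inverse not_less)
      show ?thesis
      proof (cases "i' < m")
        case True
        show ?thesis
        proof (cases "j < n + m")
          case True
          show ?thesis
          proof (cases "j < n")
            case True
            from B[of i' j] i' \<open>i' < m\<close> True show ?thesis
              unfolding rmul_col[OF S2c] lmul_row[OF S2r] blk_def
              by simp
          next
            case False
            have jj: "j - n < m" "n \<le> j" using False \<open>j < n + m\<close> by arith+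
            from B[of i' j] i' \<open>i' < m\<close> jj False \<open>j < n + m\<close> show ?thesis
              unfolding rmul_col[OF S2c] lmul_row[OF S2r] blk_def
              by simp
          qed
        next
          case False
          with i' show ?thesis
            unfolding blk_def
            by (auto simp: matsD2[OF Fm] matsD2[OF fcm])
        qed
      next
        case False
        then show ?thesis using i'
          by (auto simp: blk_def matsD1[OF Fm] matsD1[OF fcm])
      qed
    qed
  qed
qed


lemma hom:
  assumes n: "0 < n" and m: "0 < m" and a: "a \<in> D n" and c: "c \<in> D m"
    and x: "x \<in> mats n m" and X: "blk n a x c \<in> D (n + m)"
    and Y: "blk n a (mscale z x) c \<in> D (n + m)"
  shows "ub n m (f (n + m) (blk n a (mscale z x) c)) = mscale z (ub n m (f (n + m) (blk n a x c)))"
proof -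
  have am: "a \<in> mats n n" using D_mats n a by blast
  have cm: "c \<in> mats m m" using D_mats m c by blast
  define Sd :: "complex mtx" where "Sd = (\<lambda>l j. if l = j then (if j < n then 1 else if j < n + m then z else 0) else 0)"
  have Sc: "\<And>l j. Sd l j = (if l = j then (if j < n then 1 else if j < n + m then z else 0) else 0)" by (simp add: Sd_def)
  have Sr: "\<And>i l. Sd i l = (if l = i then (if i < n then 1 else if i < n + m then z else 0) else 0)" by (auto simp add: Sd_def)
  have Sm: "Sd \<in> mats (n+m) (n+m)" unfolding mats_def Sd_def by auto
  have e: "rmul (n+m) (blk n a x c) Sd = lmul (n+m) Sd (blk n a (mscale z x) c)"
    unfolding rmul_col[OF Sc] lmul_row[OF Sr]
    by (auto intro!: ext simp: blk_def mscale_def matsD1[OF am] matsD2[OF am] matsD1[OF cm] matsD2[OF cm] matsD1[OF x] matsD2[OF x])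
  have r: "rmul (n+m) (f (n+m) (blk n a x c)) Sd = lmul (n+m) Sd (f (n+m) (blk n a (mscale z x) c))"
    using icw[OF _ _ X Y Sm e] n by simp
  show ?thesis
  proof (rule ext, rule ext)
    fix i j
    have A: "rmul (n+m) (f (n+m) (blk n a x c)) Sd i (j+n) = lmul (n+m) Sd (f (n+m) (blk n a (mscale z x) c)) i (j+n)"
      using r by simp
    show "ub n m (f (n + m) (blk n a (mscale z x) c)) i j = mscale z (ub n m (f (n + m) (blk n a x c))) i j"
      using A unfolding rmul_col[OF Sc] lmul_row[OF Sr] ub_def mscale_def by auto
  qed
qed


lemma addl:
  assumes n: "0 < n" and m: "0 < m" and a: "a \<in> D n" and c: "c \<in> D m"
    and x1: "x1 \<in> mats n m" and x2: "x2 \<in> mats n m"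
    and X: "blk n a (rowm m x1 x2) (dsum m c c) \<in> D (n + (m + m))"
    and Z1: "blk n a x1 c \<in> D (n + m)" and Z2: "blk n a x2 c \<in> D (n + m)"
    and Y: "blk n a (madd x1 x2) c \<in> D (n + m)"
  shows "ub n m (f (n + m) (blk n a (madd x1 x2) c)) =
     madd (ub n m (f (n + m) (blk n a x1 c))) (ub n m (f (n + m) (blk n a x2 c)))"
proof -
  have am: "a \<in> mats n n" using D_mats n a by blast
  have cm: "c \<in> mats m m" using D_mats m c by blast
  define K where "K = n + (m + m)"
  have K: "0 < K" using n K_def by simp
  define T1 :: "complex mtx" where "T1 = (\<lambda>l j. if l = j then (if j < n + m then 1 else 0) else 0)"
  have T1c: "\<And>l j. T1 l j = (if l = j then (if j < n + m then 1 else 0) else 0)" by (simp add: T1_def)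
  have T1r: "\<And>i l. T1 i l = (if l = i then (if i < n + m then 1 else 0) else 0)" by (auto simp add: T1_def)
  have T1m: "T1 \<in> mats K (n+m)" unfolding mats_def T1_def K_def by auto
  define T2 :: "complex mtx" where "T2 = (\<lambda>l j. if l = (if j < n then j else j + m) then (if j < n + m then 1 else 0) else 0)"
  have T2c: "\<And>l j. T2 l j = (if l = (if j < n then j else j + m) then (if j < n + m then 1 else 0) else 0)" by (simp add: T2_def)
  have T2r: "\<And>i l. T2 i l = (if l = (if i < n then i else i - m) then (if i < n \<or> (n + m \<le> i \<and> i < K) then 1 else 0) else 0)"
    by (auto simp add: T2_def K_def)
  have T2m: "T2 \<in> mats K (n+m)" unfolding mats_def T2_def K_def by auto
  define T3 :: "complex mtx" where "T3 = (\<lambda>l j. if l = j + m then (if n \<le> j \<and> j < n + m then 1 else 0) else 0)"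
  have T3c: "\<And>l j. T3 l j = (if l = j + m then (if n \<le> j \<and> j < n + m then 1 else 0) else 0)" by (simp add: T3_def)
  define S :: "complex mtx" where "S = (\<lambda>l j. T1 l j + T3 l j)"
  have Sr: "\<And>i l. S i l = (if l = (if i < n + m then i else i - m) then (if i < K then 1 else 0) else 0)"
    by (auto simp add: S_def T1_def T3_def K_def)
  have Sm: "S \<in> mats K (n+m)" unfolding mats_def S_def T1_def T3_def K_def by auto
  have XD: "blk n a (rowm m x1 x2) (dsum m c c) \<in> D K" using X K_def by simp
  have e1: "rmul K (blk n a (rowm m x1 x2) (dsum m c c)) T1 = lmul (n+m) T1 (blk n a x1 c)"
    unfolding rmul_col[OF T1c] lmul_row[OF T1r] K_def
    by (auto intro!: ext simp: blk_def dsum_def rowm_def mzero_def matsD1[OF am] matsD2[OF am] matsD1[OF cm] matsD2[OF cm] matsD1[OF x1] matsD2[OF x1])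
  have e2: "rmul K (blk n a (rowm m x1 x2) (dsum m c c)) T2 = lmul (n+m) T2 (blk n a x2 c)"
    unfolding rmul_col[OF T2c] lmul_row[OF T2r] K_def
    apply (auto intro!: ext simp: blk_def dsum_def rowm_def mzero_def matsD1[OF am] matsD2[OF am] matsD1[OF cm] matsD2[OF cm] matsD1[OF x2] matsD2[OF x2] matsD1[OF x1] matsD2[OF x1])
    apply (simp_all add: add.commute)
    apply (arith+)?
    done
  have e3: "rmul K (blk n a (rowm m x1 x2) (dsum m c c)) S = lmul (n+m) S (blk n a (madd x1 x2) c)"
    unfolding S_def rmul_add
    unfolding rmul_col[OF T1c] rmul_col[OF T3c] lmul_row[OF Sr[unfolded S_def]] K_def
    apply (auto intro!: ext simp: blk_def dsum_def rowm_def mzero_def madd_def matsD1[OF am] matsD2[OF am] matsD1[OF cm] matsD2[OF cm] matsD1[OF x2] matsD2[OF x2] matsD1[OF x1] matsD2[OF x1])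
    apply (simp_all add: add.commute)
    apply (arith+)?
    done
  define G where "G = f K (blk n a (rowm m x1 x2) (dsum m c c))"
  have r1: "rmul K G T1 = lmul (n+m) T1 (f (n+m) (blk n a x1 c))"
    unfolding G_def using icw[OF K _ XD Z1 T1m e1] n by simp
  have r2: "rmul K G T2 = lmul (n+m) T2 (f (n+m) (blk n a x2 c))"
    unfolding G_def using icw[OF K _ XD Z2 T2m e2] n by simp
  have r3: "rmul K G S = lmul (n+m) S (f (n+m) (blk n a (madd x1 x2) c))"
    unfolding G_def using icw[OF K _ XD Y Sm e3] n by simp
  show ?thesis
  proof (rule ext, rule ext)
    fix i j
    have A1: "rmul K G T1 i (j+n) = lmul (n+m) T1 (f (n+m) (blk n a x1 c)) i (j+n)" using r1 by simp
    have A2: "rmul K G T2 i (j+n) = lmul (n+m) T2 (f (n+m) (blk n a x2 c)) i (j+n)" using r2 by simp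
    have A3: "rmul K G S i (j+n) = lmul (n+m) S (f (n+m) (blk n a (madd x1 x2) c)) i (j+n)" using r3 by simp
    show "ub n m (f (n + m) (blk n a (madd x1 x2) c)) i j =
      madd (ub n m (f (n + m) (blk n a x1 c))) (ub n m (f (n + m) (blk n a x2 c))) i j"
    proof (cases "i < n \<and> j < m")
      case True
      have B1: "G i (j+n) = f (n+m) (blk n a x1 c) i (j+n)"
        using A1 True unfolding rmul_col[OF T1c] lmul_row[OF T1r] K_def by auto
      have B2: "G i (j+n+m) = f (n+m) (blk n a x2 c) i (j+n)"
        using A2 True unfolding rmul_col[OF T2c] lmul_row[OF T2r] K_def by auto
      have B3: "G i (j+n) + G i (j+n+m) = f (n+m) (blk n a (madd x1 x2) c) i (j+n)"
        using A3 True unfolding S_def rmul_add rmul_col[OF T1c] rmul_col[OF T3c]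
          lmul_row[OF Sr[unfolded S_def]] K_def by auto
      show ?thesis using B1 B2 B3 True unfolding ub_def madd_def by simp
    next
      case False
      then show ?thesis unfolding ub_def madd_def by auto
    qed
  qed
qed

end


lemma mscale_mult: "mscale u (mscale v x) = mscale (u * v) x"
  by (simp add: mscale_def scaleC_mult)
lemma mscale_one[simp]: "mscale 1 x = x"
  by (simp add: mscale_def)
lemma mscale_madd: "mscale t (madd x y) = madd (mscale t x) (mscale t y)"
  by (simp add: mscale_def madd_def scaleC_add_right)
lemma mscale_mats: "x \<in> mats n m \<Longrightarrow> mscale t x \<in> mats n m"
  by (simp add: mscale_def mats_def)
lemma madd_mats: fixes x :: "('a::monoid_add) mtx" shows "x \<in> mats n m \<Longrightarrow> y \<in> mats n m \<Longrightarrow> madd x y \<in> mats n m"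
  by (simp add: madd_def mats_def)
lemma mscale_cancel: "t \<noteq> 0 \<Longrightarrow> mscale t x = mscale t y \<Longrightarrow> x = y"
proof -
  assume t: "t \<noteq> 0" and e: "mscale t x = mscale t y"
  have "mscale (inverse t) (mscale t x) = mscale (inverse t) (mscale t y)" using e by simp
  thus "x = y" using t by (simp add: mscale_mult)
qed

lemma open_dir:
  fixes N :: "nat \<Rightarrow> ('v::complex_normed_space) mtx \<Rightarrow> real"
  assumes op: "opspace N" and fo: "finitely_open N D" and k: "0 < k" and p: "p \<in> D k"
    and pm: "p \<in> mats k k" and v: "v \<in> mats k k"
  shows "\<exists>\<epsilon>>0. \<forall>t. cmod t < \<epsilon> \<longrightarrow> madd p (mscale t v) \<in> D k"
proof -
  define V where "V = (\<lambda>l::nat. if l = 0 then p else v)"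
  have Vm: "\<forall>l<2. V l \<in> mats k k" using pm v by (simp add: V_def)
  have sp: "madd p (mscale t v) \<in> fspan 2 V" for t
    unfolding fspan_def
    by (rule CollectI, rule exI[of _ "\<lambda>l. if l = 0 then 1 else t"])
       (auto simp: V_def madd_def mscale_def numeral_2_eq_2 intro!: ext)
  have p0: "p = madd p (mscale 0 v)" by (auto simp: madd_def mscale_def intro!: ext)
  have psp: "p \<in> fspan 2 V" using sp[of 0] p0 by simp
  have pI: "p \<in> D k \<inter> fspan 2 V" using p psp by blast
  obtain \<epsilon> where e: "\<epsilon> > 0" and eD: "\<forall>x\<in>fspan 2 V. N k (mdiff x p) < \<epsilon> \<longrightarrow> x \<in> D k"
  proof -
    have Vm': "\<And>l. l < 2 \<Longrightarrow> V l \<in> mats k k" using Vm by blast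
    have "\<exists>\<epsilon>>0. \<forall>x\<in>fspan 2 V. N k (mdiff x p) < \<epsilon> \<longrightarrow> x \<in> D k"
      using fo[unfolded finitely_open_def, rule_format, OF k Vm' pI] .
    thus ?thesis using that by blast
  qed
  have O2: "\<forall>n>0. \<forall>x\<in>mats n n. 0 \<le> N n x \<and> (N n x = 0 \<longleftrightarrow> x = mzero)"
    using op unfolding opspace_def by (elim conjE) assumption
  have O4: "\<forall>n>0. \<forall>z. \<forall>x\<in>mats n n. N n (mscale z x) = cmod z * N n x"
    using op unfolding opspace_def by (elim conjE) assumption
  have Nv: "0 \<le> N k v" using O2[rule_format, OF k v] by simp
  have Ns: "\<And>t. N k (mscale t v) = cmod t * N k v" using O4[rule_format, OF k] v by simp
  show ?thesis
  proof (intro exI[of _ "\<epsilon> / (N k v + 1)"] conjI allI impI)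
    show "0 < \<epsilon> / (N k v + 1)" using e Nv by simp
    fix t :: complex
    assume t: "cmod t < \<epsilon> / (N k v + 1)"
    have d: "mdiff (madd p (mscale t v)) p = mscale t v"
      by (auto simp: madd_def mdiff_def intro!: ext)
    have "cmod t * (N k v + 1) < \<epsilon>" using t Nv by (simp add: pos_less_divide_eq)
    moreover have "cmod t * N k v \<le> cmod t * (N k v + 1)" by (simp add: mult_left_mono)
    ultimately have "N k (mdiff (madd p (mscale t v)) p) < \<epsilon>" unfolding d Ns by linarith
    thus "madd p (mscale t v) \<in> D k" using eD sp by blast
  qed
qed

context
  fixes D :: "nat \<Rightarrow> ('v::complex_normed_space) mtx set"
    and E :: "nat \<Rightarrow> ('w::complex_normed_space) mtx set"
    and f :: "nat \<Rightarrow> 'v mtx \<Rightarrow> 'w mtx"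
    and N :: "nat \<Rightarrow> 'v mtx \<Rightarrow> real"
  assumes ncD: "nc_set D" and ncE: "nc_set E" and ncf: "nc_function D E f"
    and op: "opspace N" and fo: "finitely_open N D"
begin

lemma dsumD: "0 < n \<Longrightarrow> 0 < m \<Longrightarrow> a \<in> D n \<Longrightarrow> c \<in> D m \<Longrightarrow> dsum n a c \<in> D (n + m)"
  using ncD unfolding nc_set_def by blast

lemma ball2:
  assumes n: "0 < n" and m: "0 < m" and a: "a \<in> D n" and c: "c \<in> D m" and b: "b \<in> mats n m"
  shows "\<exists>\<epsilon>>0. \<forall>t. cmod t < \<epsilon> \<longrightarrow> blk n a (mscale t b) c \<in> D (n + m)"
proof -
  have p: "dsum n a c \<in> D (n + m)" using dsumD n m a c by blast
  have pm: "dsum n a c \<in> mats (n+m) (n+m)" using D_mats[OF ncD ncE ncf] p n by simp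
  have v: "blk n mzero b mzero \<in> mats (n+m) (n+m)"
    using b unfolding mats_def blk_def mzero_def by auto
  have eq: "\<And>t. blk n a (mscale t b) c = madd (dsum n a c) (mscale t (blk n mzero b mzero))"
    unfolding blk_def dsum_def madd_def mscale_def mzero_def by (intro ext) simp
  show ?thesis using open_dir[OF op fo _ p pm v] n unfolding eq by simp
qed

lemma ball3:
  assumes n: "0 < n" and m: "0 < m" and a: "a \<in> D n" and c: "c \<in> D m"
    and b1: "b1 \<in> mats n m" and b2: "b2 \<in> mats n m"
  shows "\<exists>\<epsilon>>0. \<forall>t. cmod t < \<epsilon> \<longrightarrow>
     blk n a (rowm m (mscale t b1) (mscale t b2)) (dsum m c c) \<in> D (n + (m + m))"
proof -
  have cc: "dsum m c c \<in> D (m + m)" using dsumD m c by blast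
  have p: "dsum n a (dsum m c c) \<in> D (n + (m + m))" using dsumD[OF n _ a cc] m by simp
  have pm: "dsum n a (dsum m c c) \<in> mats (n+(m+m)) (n+(m+m))" using D_mats[OF ncD ncE ncf] p n by simp
  have v: "blk n mzero (rowm m b1 b2) mzero \<in> mats (n+(m+m)) (n+(m+m))"
    using b1 b2 unfolding mats_def blk_def mzero_def rowm_def by auto
  have eq: "\<And>t. blk n a (rowm m (mscale t b1) (mscale t b2)) (dsum m c c)
      = madd (dsum n a (dsum m c c)) (mscale t (blk n mzero (rowm m b1 b2) mzero))"
    unfolding blk_def dsum_def madd_def mscale_def mzero_def rowm_def by (intro ext) simp
  show ?thesis using open_dir[OF op fo _ p pm v] n unfolding eq by simp
qed

end


context
  fixes D :: "nat \<Rightarrow> ('v::complex_normed_space) mtx set"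
    and E :: "nat \<Rightarrow> ('w::complex_normed_space) mtx set"
    and f :: "nat \<Rightarrow> 'v mtx \<Rightarrow> 'w mtx"
    and N :: "nat \<Rightarrow> 'v mtx \<Rightarrow> real"
  assumes ncD: "nc_set D" and ncE: "nc_set E" and ncf: "nc_function D E f"
    and op: "opspace N" and fo: "finitely_open N D"
begin

lemma Delta_props:
  assumes n: "0 < n" and m: "0 < m" and a: "a \<in> D n" and c: "c \<in> D m"
  shows "(\<forall>b\<in>mats n m. blk n a b c \<in> D (n + m) \<longrightarrow>
            f (n + m) (blk n a b c) = blk n (f n a) (Delta D f n m a c b) (f m c)) \<and>
         (\<forall>z. \<forall>b\<in>mats n m. Delta D f n m a c (mscale z b) = mscale z (Delta D f n m a c b))"
proof -
  have "\<forall>b\<in>mats n m. \<exists>\<epsilon>>0. \<forall>t. cmod t < \<epsilon> \<longrightarrow> blk n a (mscale t b) c \<in> D (n + m)"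
    using ball2[OF ncD ncE ncf op fo n m a c] by blast
  then obtain ep where ep: "\<And>b. b \<in> mats n m \<Longrightarrow> ep b > 0 \<and>
      (\<forall>t. cmod t < ep b \<longrightarrow> blk n a (mscale t b) c \<in> D (n + m))"
    using bchoice by metis
  define e where "e b = ep b / 2" for b :: "'v mtx"
  have e_pos: "\<And>b. b \<in> mats n m \<Longrightarrow> e b > 0" using ep unfolding e_def by auto
  have eD: "\<And>b. b \<in> mats n m \<Longrightarrow> blk n a (mscale (complex_of_real (e b)) b) c \<in> D (n + m)"
  proof -
    fix b :: "'v mtx" assume b: "b \<in> mats n m"
    have "cmod (complex_of_real (e b)) < ep b" using ep[OF b] e_pos[OF b] unfolding e_def by simp
    thus "blk n a (mscale (complex_of_real (e b)) b) c \<in> D (n + m)" using ep[OF b] by blast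
  qed
  define g where "g x = ub n m (f (n + m) (blk n a x c))" for x :: "'v mtx"
  define L where "L b = (if b \<in> mats n m then mscale (inverse (complex_of_real (e b)))
                   (g (mscale (complex_of_real (e b)) b)) else mzero)" for b :: "'v mtx"
  have gh: "\<And>x z. x \<in> mats n m \<Longrightarrow> blk n a x c \<in> D (n + m) \<Longrightarrow> blk n a (mscale z x) c \<in> D (n + m)
      \<Longrightarrow> g (mscale z x) = mscale z (g x)"
    unfolding g_def using hom[OF ncD ncE ncf n m a c] by blast
  have Lg: "\<And>b t. b \<in> mats n m \<Longrightarrow> blk n a (mscale t b) c \<in> D (n + m) \<Longrightarrow> g (mscale t b) = mscale t (L b)"
  proof -
    fix b :: "'v mtx" and t assume b: "b \<in> mats n m" and bt: "blk n a (mscale t b) c \<in> D (n + m)"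
    define ee where "ee = complex_of_real (e b)"
    have ne: "ee \<noteq> 0" using e_pos[OF b] unfolding ee_def by simp
    have xb: "mscale ee b \<in> mats n m" using mscale_mats b by blast
    have eq: "mscale t b = mscale (t / ee) (mscale ee b)" using ne by (simp add: mscale_mult)
    have "g (mscale t b) = mscale (t / ee) (g (mscale ee b))"
      using gh[OF xb eD[OF b, folded ee_def], of "t / ee"] bt eq by simp
    also have "\<dots> = mscale t (L b)" using b ne
      by (simp add: L_def mscale_mult divide_inverse ee_def)
    finally show "g (mscale t b) = mscale t (L b)" .
  qed
  have Lm: "L b \<in> mats n m" for b
  proof (cases "b \<in> mats n m")
    case True
    thus ?thesis unfolding L_def g_def using mscale_mats[OF ub_mats] by simp
  next
    case False
    hence "L b = mzero" by (simp add: L_def)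
    thus ?thesis by (simp add: mats_def mzero_def)
  qed
  have Lblk: "\<And>b. b \<in> mats n m \<Longrightarrow> blk n a b c \<in> D (n + m) \<Longrightarrow>
      f (n + m) (blk n a b c) = blk n (f n a) (L b) (f m c)"
  proof -
    fix b :: "'v mtx" assume b: "b \<in> mats n m" and bD: "blk n a b c \<in> D (n + m)"
    have "g b = L b" using Lg[of b 1] b bD by simp
    thus "f (n + m) (blk n a b c) = blk n (f n a) (L b) (f m c)"
      using struct[OF ncD ncE ncf n m a c b bD] unfolding g_def by simp
  qed
  have Lsc: "\<And>z b. b \<in> mats n m \<Longrightarrow> L (mscale z b) = mscale z (L b)"
  proof -
    fix z and b :: "'v mtx" assume b: "b \<in> mats n m"
    have zb: "mscale z b \<in> mats n m" using mscale_mats b by blast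
    define r1 where "r1 = ep b"
    define r2 where "r2 = ep (mscale z b)"
    have r1: "r1 > 0" using ep[OF b] r1_def by simp
    have r2: "r2 > 0" using ep[OF zb] r2_def by simp
    define t where "t = min r2 (r1 / (cmod z + 1)) / 2"
    have cz: "0 < cmod z + 1" by (smt (verit) norm_ge_zero)
    have q: "0 < r1 / (cmod z + 1)" using r1 cz by simp
    have t: "t > 0" using q r2 unfolding t_def by (auto simp: min_def)
    have t2: "t < r2" using q r2 unfolding t_def by (auto simp: min_def)
    have mq: "min r2 (r1 / (cmod z + 1)) \<le> r1 / (cmod z + 1)" by simp
    have t1: "t < r1 / (cmod z + 1)" using q mq t unfolding t_def by linarith
    have "t * (cmod z + 1) < r1" using t1 cz by (simp add: pos_less_divide_eq)
    hence t1': "t * cmod z < r1" using t by (simp add: algebra_simps)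
    define tc where "tc = complex_of_real t"
    have tc0: "tc \<noteq> 0" using t tc_def by simp
    have D1: "blk n a (mscale tc (mscale z b)) c \<in> D (n + m)"
      using ep[OF zb] t2 t unfolding tc_def r2_def by simp
    have eqm: "mscale tc (mscale z b) = mscale (tc * z) b" by (simp add: mscale_mult)
    have D2: "blk n a (mscale (tc * z) b) c \<in> D (n + m)"
      using D1 eqm by simp
    have "mscale tc (L (mscale z b)) = g (mscale tc (mscale z b))" using Lg[OF zb D1] by simp
    also have "\<dots> = g (mscale (tc * z) b)" using eqm by simp
    also have "\<dots> = mscale (tc * z) (L b)" using Lg[OF b D2] by simp
    also have "\<dots> = mscale tc (mscale z (L b))" by (simp add: mscale_mult)
    finally show "L (mscale z b) = mscale z (L b)" using mscale_cancel tc0 by blast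
  qed
  have Ladd: "\<And>b1 b2. b1 \<in> mats n m \<Longrightarrow> b2 \<in> mats n m \<Longrightarrow> L (madd b1 b2) = madd (L b1) (L b2)"
  proof -
    fix b1 b2 :: "'v mtx" assume b1: "b1 \<in> mats n m" and b2: "b2 \<in> mats n m"
    have b12: "madd b1 b2 \<in> mats n m" using madd_mats b1 b2 by blast
    obtain r3 where r3: "r3 > 0" and r3D: "\<forall>t. cmod t < r3 \<longrightarrow>
       blk n a (rowm m (mscale t b1) (mscale t b2)) (dsum m c c) \<in> D (n + (m + m))"
      using ball3[OF ncD ncE ncf op fo n m a c b1 b2] by blast
    define t where "t = min (min (ep b1) (ep b2)) (min (ep (madd b1 b2)) r3) / 2"
    have p1: "ep b1 > 0" "ep b2 > 0" "ep (madd b1 b2) > 0"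
      using ep[OF b1] ep[OF b2] ep[OF b12] by auto
    have t: "t > 0" "t < ep b1" "t < ep b2" "t < ep (madd b1 b2)" "t < r3"
      using p1 r3 unfolding t_def by auto
    define tc where "tc = complex_of_real t"
    have tc0: "tc \<noteq> 0" using t tc_def by simp
    have ct: "cmod tc = t" using t tc_def by simp
    have X: "blk n a (rowm m (mscale tc b1) (mscale tc b2)) (dsum m c c) \<in> D (n + (m + m))"
      using r3D ct t by simp
    have Z1: "blk n a (mscale tc b1) c \<in> D (n + m)" using ep[OF b1] ct t by simp
    have Z2: "blk n a (mscale tc b2) c \<in> D (n + m)" using ep[OF b2] ct t by simp
    have Y0: "blk n a (mscale tc (madd b1 b2)) c \<in> D (n + m)" using ep[OF b12] ct t by simp
    have Y: "blk n a (madd (mscale tc b1) (mscale tc b2)) c \<in> D (n + m)"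
      using Y0 by (simp add: mscale_madd)
    have A: "g (madd (mscale tc b1) (mscale tc b2)) = madd (g (mscale tc b1)) (g (mscale tc b2))"
      unfolding g_def
      using addl[OF ncD ncE ncf n m a c mscale_mats[OF b1] mscale_mats[OF b2] X Z1 Z2 Y] .
    have "mscale tc (L (madd b1 b2)) = g (mscale tc (madd b1 b2))" using Lg[OF b12 Y0] by simp
    also have "\<dots> = madd (g (mscale tc b1)) (g (mscale tc b2))" using A by (simp add: mscale_madd)
    also have "\<dots> = madd (mscale tc (L b1)) (mscale tc (L b2))" using Lg[OF b1 Z1] Lg[OF b2 Z2] by simp
    also have "\<dots> = mscale tc (madd (L b1) (L b2))" by (simp add: mscale_madd)
    finally show "L (madd b1 b2) = madd (L b1) (L b2)" using mscale_cancel tc0 by blast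
  qed
  have L0: "\<And>b. b \<notin> mats n m \<Longrightarrow> L b = mzero" by (simp add: L_def)
  have DL: "Delta D f n m a c = L"
    unfolding Delta_def
  proof (rule the_equality)
    show "(\<forall>b. b \<notin> mats n m \<longrightarrow> L b = mzero) \<and>
      (\<forall>b\<in>mats n m. L b \<in> mats n m) \<and>
      (\<forall>b1\<in>mats n m. \<forall>b2\<in>mats n m. L (madd b1 b2) = madd (L b1) (L b2)) \<and>
      (\<forall>z. \<forall>b\<in>mats n m. L (mscale z b) = mscale z (L b)) \<and>
      (\<forall>b\<in>mats n m. blk n a b c \<in> D (n + m) \<longrightarrow>
          f (n + m) (blk n a b c) = blk n (f n a) (L b) (f m c))"
      using Lm Ladd Lsc Lblk L0 by blast
  next
    fix L' assume P': "(\<forall>b. b \<notin> mats n m \<longrightarrow> L' b = mzero) \<and>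
      (\<forall>b\<in>mats n m. L' b \<in> mats n m) \<and>
      (\<forall>b1\<in>mats n m. \<forall>b2\<in>mats n m. L' (madd b1 b2) = madd (L' b1) (L' b2)) \<and>
      (\<forall>z. \<forall>b\<in>mats n m. L' (mscale z b) = mscale z (L' b)) \<and>
      (\<forall>b\<in>mats n m. blk n a b c \<in> D (n + m) \<longrightarrow>
          f (n + m) (blk n a b c) = blk n (f n a) (L' b) (f m c))"
    show "L' = L"
    proof (rule ext)
      fix b
      show "L' b = L b"
      proof (cases "b \<in> mats n m")
        case False
        then show ?thesis using P' by (simp add: L_def)
      next
        case True
        define ee where "ee = complex_of_real (e b)"
        have ne: "ee \<noteq> 0" using e_pos[OF True] unfolding ee_def by simp
        have xb: "mscale ee b \<in> mats n m" using mscale_mats True by blast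
        have xD: "blk n a (mscale ee b) c \<in> D (n + m)" using eD[OF True] ee_def by simp
        have "blk n (f n a) (L' (mscale ee b)) (f m c) = blk n (f n a) (L (mscale ee b)) (f m c)"
          using P' Lblk[OF xb xD] xb xD by auto
        hence "ub n m (blk n (f n a) (L' (mscale ee b)) (f m c)) = ub n m (blk n (f n a) (L (mscale ee b)) (f m c))"
          by simp
        hence "L' (mscale ee b) = L (mscale ee b)"
          using ub_blk[of "L' (mscale ee b)" n m] ub_blk[OF Lm] P' xb by simp
        hence "mscale ee (L' b) = mscale ee (L b)" using P' Lsc[OF True] True by simp
        thus ?thesis using mscale_cancel ne by blast
      qed
    qed
  qed
  show ?thesis using DL Lblk Lsc by simp
qed

end

theorem corollary3p2:
  fixes NV :: "nat \<Rightarrow> ('v::complex_normed_space) mtx \<Rightarrow> real"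
    and NW :: "nat \<Rightarrow> ('w::complex_normed_space) mtx \<Rightarrow> real"
    and D :: "nat \<Rightarrow> 'v mtx set" and E :: "nat \<Rightarrow> 'w mtx set"
    and f :: "nat \<Rightarrow> 'v mtx \<Rightarrow> 'w mtx"
  assumes "opspace NV" and "opspace NW"
    and "nc_set D" and "finitely_open NV D" and "nc_set E"
    and "nc_function D E f" and "locally_bounded NV NW D f"
    and "0 < n" and "0 < m" and "a \<in> D n" and "c \<in> D m" and "b \<in> mats n m"
  shows "delta E n m (f n a) (f m c) (Delta D f n m a c b) \<le> delta D n m a c b"
proof -
  note DP = Delta_props[OF assms(3,5,6,1,4,8,9,10,11)]
  have sub: "{t::ennreal. \<forall>s::real. 0 \<le> s \<and> ennreal s \<le> t \<longrightarrow>
        blk n a (mscale (complex_of_real s) b) c \<in> D (n + m)} \<subseteq>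
      {t::ennreal. \<forall>s::real. 0 \<le> s \<and> ennreal s \<le> t \<longrightarrow>
        blk n (f n a) (mscale (complex_of_real s) (Delta D f n m a c b)) (f m c) \<in> E (n + m)}"
  proof (rule subsetI, simp only: mem_Collect_eq, intro allI impI)
    fix t :: ennreal and s :: real
    assume H: "\<forall>s::real. 0 \<le> s \<and> ennreal s \<le> t \<longrightarrow>
        blk n a (mscale (complex_of_real s) b) c \<in> D (n + m)" and s: "0 \<le> s \<and> ennreal s \<le> t"
    have bD: "blk n a (mscale (complex_of_real s) b) c \<in> D (n + m)" using H s by blast
    have sb: "mscale (complex_of_real s) b \<in> mats n m" using mscale_mats assms(12) by blast
    have "f (n + m) (blk n a (mscale (complex_of_real s) b) c) \<in> E (n + m)"
      using fE[OF assms(3,5,6)] bD assms(8) by simp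
    moreover have "f (n + m) (blk n a (mscale (complex_of_real s) b) c) =
       blk n (f n a) (mscale (complex_of_real s) (Delta D f n m a c b)) (f m c)"
      using DP sb bD assms(12) by simp
    ultimately show "blk n (f n a) (mscale (complex_of_real s) (Delta D f n m a c b)) (f m c) \<in> E (n + m)"
      by simp
  qed
  show ?thesis
    unfolding delta_def by (rule ennreal_inv_antimono, rule Sup_subset_mono, rule sub)
qed

end
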